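(* Let $N,M$ be integers with $0<M<N/2$. For symbols $a,b\in\{0,1,X\}$ let $\mathbf{Str}_{ab}$ be the sub-poset of $\mathbf{Str}(N,M)$ consisting of strings $s$ with $s_1=a$ and $s_N=b$. Then the geometric realizations of $\mathbf{Str}_{0X}$, $\mathbf{Str}_{X0}$, $\mathbf{Str}_{1X}$ and $\mathbf{Str}_{X1}$ are contractible.
   Context: A circular symbol string of length $N$ is $s=s_1\cdots s_N$ with each $s_i\in\{0,1,X\}$, indices read cyclically modulo $N$; $0,1$ are called bits. A block of $s$ is a maximal cyclic run of consecutive equal symbols. $s$ is a circular cellular string of rank $M$ if it has exactly $M$ blocks of symbol $0$, exactly $M$ blocks of symbol $1$, and every block of symbol $X$ is cyclically preceded and followed by blocks of different bits (one of symbol $0$ and one of symbol $1$). $\mathbf{Str}(N,M)$ is the set of such strings, partially ordered by $s'<s$ iff $s$ is obtained from $s'$ by replacing some (at least one) of the bits of $s'$ by $X$. The geometric realization of a poset is that of its order complex. *)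

theory Defs
  imports "HOL-Analysis.Analysis"
begin

datatype sym = S0 | S1 | SX

text \<open>A circular string of length N is a list s of length N; the paper's s_i
  (i = 1..N) is s ! (i - 1), and cyclic index arithmetic is taken mod N.\<close>

definition cat :: "sym list \<Rightarrow> int \<Rightarrow> sym" where
  "cat s i = s ! nat (i mod int (length s))"

text \<open>Number of maximal cyclic blocks of symbol c: if the whole string is c,
  there is one block; otherwise count the positions where a c-block starts.\<close>
definition nblocks :: "sym list \<Rightarrow> sym \<Rightarrow> nat" where
  "nblocks s c = (if s \<noteq> [] \<and> (\<forall>i<length s. s ! i = c) then 1
     else card {i. i < length s \<and> cat s (int i) = c \<and> cat s (int i - 1) \<noteq> c})"

text \<open>Every maximal X-block s_i..s_{i+d-1} (cyclically preceded by a non-X symbol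
  at i-1 and followed by a non-X symbol at i+d) is preceded and followed by
  blocks of different bits.\<close>
definition xblocks_ok :: "sym list \<Rightarrow> bool" where
  "xblocks_ok s = (\<forall>i d. i < length s \<and> 0 < d \<and>
       cat s (int i - 1) \<noteq> SX \<and> (\<forall>t<d. cat s (int i + int t) = SX) \<and>
       cat s (int i + int d) \<noteq> SX
     \<longrightarrow> cat s (int i - 1) \<noteq> cat s (int i + int d))"

definition Str :: "nat \<Rightarrow> nat \<Rightarrow> sym list set" where
  "Str N M = {s. length s = N \<and> nblocks s S0 = M \<and> nblocks s S1 = M \<and> xblocks_ok s}"

definition strle :: "sym list \<Rightarrow> sym list \<Rightarrow> bool" where
  "strle s' s = (length s' = length s \<and> (\<forall>i<length s. s' ! i = s ! i \<or> s ! i = SX))"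

definition Str_ab :: "nat \<Rightarrow> nat \<Rightarrow> sym \<Rightarrow> sym \<Rightarrow> sym list set" where
  "Str_ab N M a b = {s \<in> Str N M. s ! 0 = a \<and> s ! (N - 1) = b}"

text \<open>Geometric realization of the order complex of a finite poset (P, le):
  all finitely supported nonnegative weight functions of total weight 1 supported
  on a chain of P, with the topology induced from the product topology
  (for finite P this is the Euclidean topology of R^P).\<close>
definition geom_real :: "'a set \<Rightarrow> ('a \<Rightarrow> 'a \<Rightarrow> bool) \<Rightarrow> ('a \<Rightarrow> real) topology" where
  "geom_real P le = subtopology (powertop_real UNIV)
     {f. (\<forall>x. 0 \<le> f x) \<and> (\<forall>x. x \<notin> P \<longrightarrow> f x = 0) \<and> finite {x. f x \<noteq> 0}
        \<and> sum f {x. f x \<noteq> 0} = 1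
        \<and> (\<forall>x y. f x \<noteq> 0 \<and> f y \<noteq> 0 \<longrightarrow> le x y \<or> le y x)}"

end

theory Submission
  imports Defs
begin


definition Rset :: "'a set \<Rightarrow> ('a \<Rightarrow> 'a \<Rightarrow> bool) \<Rightarrow> ('a \<Rightarrow> real) set" where
  "Rset P le = {f. (\<forall>x. 0 \<le> f x) \<and> (\<forall>x. x \<notin> P \<longrightarrow> f x = 0) \<and> finite {x. f x \<noteq> 0}
        \<and> sum f {x. f x \<noteq> 0} = 1
        \<and> (\<forall>x y. f x \<noteq> 0 \<and> f y \<noteq> 0 \<longrightarrow> le x y \<or> le y x)}"

lemma geom_real_Rset: "geom_real P le = subtopology (powertop_real UNIV) (Rset P le)"
  unfolding geom_real_def Rset_def by simp

lemma topspace_geom_real: "topspace (geom_real P le) = Rset P le"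
  by (simp add: geom_real_Rset)

lemma Rset_sumP:
  assumes "finite P" "g \<in> Rset P le"
  shows "sum g P = 1"
proof -
  have "{x. g x \<noteq> 0} \<subseteq> P" using assms(2) by (auto simp: Rset_def)
  then have "sum g P = sum g {x. g x \<noteq> 0}"
    by (intro sum.mono_neutral_right) (use assms in auto)
  then show ?thesis using assms(2) by (simp add: Rset_def)
qed

lemma Rset_intro:
  assumes "finite P" "\<And>x. 0 \<le> g x" "\<And>x. x \<notin> P \<Longrightarrow> g x = 0" "sum g P = 1"
    "\<And>x y. g x \<noteq> 0 \<Longrightarrow> g y \<noteq> 0 \<Longrightarrow> le x y \<or> le y x"
  shows "g \<in> Rset P le"
proof -
  have sub: "{x. g x \<noteq> 0} \<subseteq> P" using assms(3) by auto
  then have fin: "finite {x. g x \<noteq> 0}" using assms(1) finite_subset by blast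
  have "sum g P = sum g {x. g x \<noteq> 0}"
    by (intro sum.mono_neutral_right) (use assms sub in auto)
  then show ?thesis using assms fin unfolding Rset_def by auto
qed

definition push :: "'a set \<Rightarrow> ('a \<Rightarrow> 'a) \<Rightarrow> ('a \<Rightarrow> real) \<Rightarrow> ('a \<Rightarrow> real)" where
  "push P f g = (\<lambda>z. \<Sum>x\<in>{x\<in>P. f x = z}. g x)"

definition Wt :: "'a set \<Rightarrow> ('a \<Rightarrow> 'a \<Rightarrow> bool) \<Rightarrow> ('a \<Rightarrow> real) \<Rightarrow> 'a \<Rightarrow> real" where
  "Wt P le g x = (\<Sum>y\<in>{y\<in>P. le x y}. g y)"

definition Wp :: "'a set \<Rightarrow> ('a \<Rightarrow> 'a \<Rightarrow> bool) \<Rightarrow> ('a \<Rightarrow> real) \<Rightarrow> 'a \<Rightarrow> real" where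
  "Wp P le g x = (\<Sum>y\<in>{y\<in>P. le x y \<and> y \<noteq> x}. g y)"

definition Hm :: "'a set \<Rightarrow> ('a \<Rightarrow> 'a \<Rightarrow> bool) \<Rightarrow> ('a \<Rightarrow> 'a) \<Rightarrow> ('a \<Rightarrow> 'a)
    \<Rightarrow> real \<times> ('a \<Rightarrow> real) \<Rightarrow> ('a \<Rightarrow> real)" where
  "Hm P le \<phi> \<psi> tg = (\<lambda>z. \<Sum>x\<in>P.
      (if \<psi> x = z then min (Wt P le (snd tg) x) (fst tg) - min (Wp P le (snd tg) x) (fst tg) else 0)
    + (if \<phi> x = z then max (Wt P le (snd tg) x) (fst tg) - max (Wp P le (snd tg) x) (fst tg) else 0))"

lemma cont_coord:
  "continuous_map (prod_topology (top_of_set S) (geom_real P le)) euclideanreal (\<lambda>tg. snd tg y)"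
proof -
  have "continuous_map (geom_real P le) euclideanreal (\<lambda>g. g y)"
    unfolding geom_real_Rset
    by (rule continuous_map_from_subtopology) (rule continuous_map_product_projection, simp)
  then have "continuous_map (prod_topology (top_of_set S) (geom_real P le)) euclideanreal ((\<lambda>g. g y) \<circ> snd)"
    by (intro continuous_map_compose[OF continuous_map_snd])
  then show ?thesis by (simp add: o_def)
qed

lemma cont_fst:
  "continuous_map (prod_topology (top_of_set S) X) euclideanreal fst"
proof -
  have "continuous_map (top_of_set S) euclideanreal id"
    by (simp add: continuous_map_from_subtopology)
  from continuous_map_compose[OF continuous_map_fst this, of X] show ?thesis by (simp add: o_def)
qed

lemma Wt_split:
  assumes "finite P" "x \<in> P" "le x x"
  shows "Wt P le g x = g x + Wp P le g x"
proof -
  have "{y\<in>P. le x y} = insert x {y\<in>P. le x y \<and> y \<noteq> x}" using assms by auto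
  then show ?thesis unfolding Wt_def Wp_def using assms(1) by simp
qed

locale fposet =
  fixes P :: "'a set" and le :: "'a \<Rightarrow> 'a \<Rightarrow> bool"
  assumes fin: "finite P"
    and rfl: "\<And>x. x \<in> P \<Longrightarrow> le x x"
    and trn: "\<And>x y z. x \<in> P \<Longrightarrow> y \<in> P \<Longrightarrow> z \<in> P \<Longrightarrow> le x y \<Longrightarrow> le y z \<Longrightarrow> le x z"
    and asym: "\<And>x y. x \<in> P \<Longrightarrow> y \<in> P \<Longrightarrow> le x y \<Longrightarrow> le y x \<Longrightarrow> x = y"
begin

lemma Wt_split': "x \<in> P \<Longrightarrow> Wt P le g x = g x + Wp P le g x"
  using Wt_split[of P x le g] fin rfl by blast

lemma Wp_nonneg: "g \<in> Rset P le \<Longrightarrow> 0 \<le> Wp P le g x"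
  unfolding Wp_def Rset_def by (auto intro: sum_nonneg)

lemma Wt_ge: "g \<in> Rset P le \<Longrightarrow> x \<in> P \<Longrightarrow> Wp P le g x \<le> Wt P le g x"
  using Wt_split'[of x g] by (auto simp: Rset_def)

lemma Wt_le1: "g \<in> Rset P le \<Longrightarrow> Wt P le g x \<le> 1"
proof -
  assume g: "g \<in> Rset P le"
  have "Wt P le g x \<le> sum g P" unfolding Wt_def
    by (rule sum_mono2) (use fin g in \<open>auto simp: Rset_def\<close>)
  then show ?thesis using Rset_sumP[OF fin g] by simp
qed

lemma Wp_le_Wt:
  assumes g: "g \<in> Rset P le" and x: "x \<in> P" "x' \<in> P" "le x x'" "x \<noteq> x'"
  shows "Wt P le g x' \<le> Wp P le g x"
  unfolding Wt_def Wp_def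
proof (rule sum_mono2)
  show "finite {y \<in> P. le x y \<and> y \<noteq> x}" using fin by simp
  show "{y \<in> P. le x' y} \<subseteq> {y \<in> P. le x y \<and> y \<noteq> x}"
    using x trn asym by blast
  show "\<And>b. b \<in> {y \<in> P. le x y \<and> y \<noteq> x} - {y \<in> P. le x' y} \<Longrightarrow> 0 \<le> g b"
    using g by (auto simp: Rset_def)
qed

lemma Hm_in:
  assumes phi: "\<And>x. x \<in> P \<Longrightarrow> \<phi> x \<in> P" and psi: "\<And>x. x \<in> P \<Longrightarrow> \<psi> x \<in> P"
    and mphi: "\<And>x y. x \<in> P \<Longrightarrow> y \<in> P \<Longrightarrow> le x y \<Longrightarrow> le (\<phi> x) (\<phi> y)"
    and mpsi: "\<And>x y. x \<in> P \<Longrightarrow> y \<in> P \<Longrightarrow> le x y \<Longrightarrow> le (\<psi> x) (\<psi> y)"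
    and pp: "\<And>x. x \<in> P \<Longrightarrow> le (\<phi> x) (\<psi> x)"
    and t: "0 \<le> t" "t \<le> 1" and g: "g \<in> Rset P le"
  shows "Hm P le \<phi> \<psi> (t, g) \<in> Rset P le"
proof -
  define \<alpha> where "\<alpha> x = min (Wt P le g x) t - min (Wp P le g x) t" for x
  define \<beta> where "\<beta> x = max (Wt P le g x) t - max (Wp P le g x) t" for x
  have H: "Hm P le \<phi> \<psi> (t, g) z = (\<Sum>x\<in>P. (if \<psi> x = z then \<alpha> x else 0) + (if \<phi> x = z then \<beta> x else 0))" for z
    unfolding Hm_def \<alpha>_def \<beta>_def fst_conv snd_conv by (rule refl)
  have a0: "0 \<le> \<alpha> x" "0 \<le> \<beta> x" if "x \<in> P" for x
    using Wt_ge[OF g that] unfolding \<alpha>_def \<beta>_def by auto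
  have ab: "\<alpha> x + \<beta> x = g x" if "x \<in> P" for x
    using Wt_split'[OF that, of g] unfolding \<alpha>_def \<beta>_def by auto
  have gz: "g x \<noteq> 0 \<Longrightarrow> x \<in> P" for x using g by (auto simp: Rset_def)
  have gch: "g x \<noteq> 0 \<Longrightarrow> g y \<noteq> 0 \<Longrightarrow> le x y \<or> le y x" for x y using g by (auto simp: Rset_def)
  have gnn: "0 \<le> g x" for x using g by (auto simp: Rset_def)
  have an: "g x \<noteq> 0 \<and> Wp P le g x < t" if "\<alpha> x \<noteq> 0" "x \<in> P" for x
    using that Wt_split'[OF that(2), of g] gnn[of x] unfolding \<alpha>_def by (auto simp: min_def split: if_splits)
  have bn: "g x \<noteq> 0 \<and> t < Wt P le g x" if "\<beta> x \<noteq> 0" "x \<in> P" for x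
    using that Wt_split'[OF that(2), of g] gnn[of x] unfolding \<beta>_def by (auto simp: max_def split: if_splits)
  show ?thesis
  proof (rule Rset_intro[OF fin])
    show "0 \<le> Hm P le \<phi> \<psi> (t, g) z" for z
      unfolding H by (intro sum_nonneg) (use a0 in auto)
    show "Hm P le \<phi> \<psi> (t, g) z = 0" if "z \<notin> P" for z
      unfolding H using that phi psi by (intro sum.neutral) auto
    have "sum (Hm P le \<phi> \<psi> (t, g)) P
        = (\<Sum>x\<in>P. \<Sum>z\<in>P. (if \<psi> x = z then \<alpha> x else 0) + (if \<phi> x = z then \<beta> x else 0))"
      unfolding H by (rule sum.swap)
    also have "\<dots> = (\<Sum>x\<in>P. \<alpha> x + \<beta> x)"
      by (rule sum.cong) (use phi psi fin in \<open>auto simp: sum.distrib\<close>)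
    also have "\<dots> = sum g P" using ab by simp
    also have "\<dots> = 1" using Rset_sumP[OF fin g] .
    finally show "sum (Hm P le \<phi> \<psi> (t, g)) P = 1" .
    have supp: "\<exists>x\<in>P. (\<psi> x = z \<and> \<alpha> x \<noteq> 0) \<or> (\<phi> x = z \<and> \<beta> x \<noteq> 0)"
      if "Hm P le \<phi> \<psi> (t, g) z \<noteq> 0" for z
    proof (rule ccontr)
      assume "\<not> ?thesis"
      then have "Hm P le \<phi> \<psi> (t, g) z = 0" unfolding H by (intro sum.neutral) auto
      then show False using that by simp
    qed
    have cross: "le (\<phi> x') (\<psi> x)" if "x \<in> P" "x' \<in> P" "\<alpha> x \<noteq> 0" "\<beta> x' \<noteq> 0" for x x'
    proof -
      have A: "g x \<noteq> 0" "Wp P le g x < t" using an that by auto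
      have B: "g x' \<noteq> 0" "t < Wt P le g x'" using bn that by auto
      have "le x' x"
      proof (cases "x = x'")
        case True then show ?thesis using rfl that by simp
      next
        case False
        show ?thesis
        proof (rule ccontr)
          assume "\<not> le x' x"
          then have "le x x'" using gch A B by blast
          then have "Wt P le g x' \<le> Wp P le g x" using Wp_le_Wt[OF g that(1,2) _ False] by simp
          then show False using A B by simp
        qed
      qed
      then show ?thesis using mphi pp trn that phi psi by meson
    qed
    show "le z w \<or> le w z" if zw: "Hm P le \<phi> \<psi> (t, g) z \<noteq> 0" "Hm P le \<phi> \<psi> (t, g) w \<noteq> 0" for z w
    proof -
      obtain x where x: "x \<in> P" "(\<psi> x = z \<and> \<alpha> x \<noteq> 0) \<or> (\<phi> x = z \<and> \<beta> x \<noteq> 0)" using supp zw(1) by blast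
      obtain y where y: "y \<in> P" "(\<psi> y = w \<and> \<alpha> y \<noteq> 0) \<or> (\<phi> y = w \<and> \<beta> y \<noteq> 0)" using supp zw(2) by blast
      have gx: "g x \<noteq> 0" using x an bn by blast
      have gy: "g y \<noteq> 0" using y an bn by blast
      have xy: "le x y \<or> le y x" using gch gx gy by blast
      show ?thesis
        using x y
      proof (elim disjE conjE)
        assume "\<psi> x = z" "\<psi> y = w" then show ?thesis using xy mpsi x y by blast
      next
        assume "\<phi> x = z" "\<phi> y = w" then show ?thesis using xy mphi x y by blast
      next
        assume "\<psi> x = z" "\<alpha> x \<noteq> 0" "\<phi> y = w" "\<beta> y \<noteq> 0"
        then show ?thesis using cross[of x y] x y by blast
      next
        assume "\<phi> x = z" "\<beta> x \<noteq> 0" "\<psi> y = w" "\<alpha> y \<noteq> 0"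
        then show ?thesis using cross[of y x] x y by blast
      qed
    qed
  qed
qed

lemma Wt_cont:
  "continuous_map (prod_topology (top_of_set S) (geom_real P le)) euclideanreal (\<lambda>tg. Wt P le (snd tg) x)"
  unfolding Wt_def by (rule continuous_map_sum) (simp add: fin, rule cont_coord)

lemma Wp_cont:
  "continuous_map (prod_topology (top_of_set S) (geom_real P le)) euclideanreal (\<lambda>tg. Wp P le (snd tg) x)"
  unfolding Wp_def by (rule continuous_map_sum) (simp add: fin, rule cont_coord)

lemma Hm_cont:
  assumes phi: "\<And>x. x \<in> P \<Longrightarrow> \<phi> x \<in> P" and psi: "\<And>x. x \<in> P \<Longrightarrow> \<psi> x \<in> P"
    and mphi: "\<And>x y. x \<in> P \<Longrightarrow> y \<in> P \<Longrightarrow> le x y \<Longrightarrow> le (\<phi> x) (\<phi> y)"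
    and mpsi: "\<And>x y. x \<in> P \<Longrightarrow> y \<in> P \<Longrightarrow> le x y \<Longrightarrow> le (\<psi> x) (\<psi> y)"
    and pp: "\<And>x. x \<in> P \<Longrightarrow> le (\<phi> x) (\<psi> x)"
  shows "continuous_map (prod_topology (top_of_set {0..1}) (geom_real P le)) (geom_real P le) (Hm P le \<phi> \<psi>)"
proof -
  let ?X = "prod_topology (top_of_set {0..1::real}) (geom_real P le)"
  have c: "continuous_map ?X (powertop_real UNIV) (Hm P le \<phi> \<psi>)"
    unfolding continuous_map_componentwise_UNIV
  proof
    fix z
    show "continuous_map ?X euclideanreal (\<lambda>tg. Hm P le \<phi> \<psi> tg z)"
      unfolding Hm_def
    proof (intro continuous_map_sum continuous_map_add fin)
      fix x
      show "continuous_map ?X euclideanreal (\<lambda>tg. if \<psi> x = z then min (Wt P le (snd tg) x) (fst tg) - min (Wp P le (snd tg) x) (fst tg) else 0)"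
        by (cases "\<psi> x = z") (simp_all, intro continuous_map_diff continuous_map_real_min Wt_cont Wp_cont cont_fst)
      show "continuous_map ?X euclideanreal (\<lambda>tg. if \<phi> x = z then max (Wt P le (snd tg) x) (fst tg) - max (Wp P le (snd tg) x) (fst tg) else 0)"
        by (cases "\<phi> x = z") (simp_all, intro continuous_map_diff continuous_map_real_max Wt_cont Wp_cont cont_fst)
    qed
  qed
  have "Hm P le \<phi> \<psi> tg \<in> Rset P le" if "tg \<in> topspace ?X" for tg
  proof -
    obtain t g where tg: "tg = (t, g)" by fastforce
    have "t \<in> {0..1}" "g \<in> Rset P le" using that tg by (auto simp: topspace_geom_real)
    then show ?thesis using Hm_in[OF assms] tg by auto
  qed
  then have "continuous_map ?X (subtopology (powertop_real UNIV) (Rset P le)) (Hm P le \<phi> \<psi>)"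
    using c by (simp add: continuous_map_in_subtopology image_subset_iff)
  then show ?thesis by (metis geom_real_Rset)
qed

lemma Hm_0:
  assumes g: "g \<in> Rset P le"
  shows "Hm P le \<phi> \<psi> (0, g) = push P \<phi> g"
proof
  fix z
  have "Hm P le \<phi> \<psi> (0, g) z = (\<Sum>x\<in>P. if \<phi> x = z then g x else 0)"
    unfolding Hm_def
  proof (rule sum.cong[OF refl])
    fix x assume x: "x \<in> P"
    have "0 \<le> Wp P le g x" "Wt P le g x = g x + Wp P le g x" "0 \<le> g x"
      using Wp_nonneg[OF g, of x] Wt_split'[OF x, of g] g unfolding Rset_def by blast+
    then show "(if \<psi> x = z then min (Wt P le (snd (0, g)) x) (fst (0::real, g)) - min (Wp P le (snd (0, g)) x) (fst (0::real, g)) else 0) +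
         (if \<phi> x = z then max (Wt P le (snd (0, g)) x) (fst (0::real, g)) - max (Wp P le (snd (0, g)) x) (fst (0::real, g)) else 0) =
         (if \<phi> x = z then g x else 0)" by (simp add: min_def max_def)
  qed
  also have "\<dots> = push P \<phi> g z" unfolding push_def using fin by (simp add: sum.inter_filter)
  finally show "Hm P le \<phi> \<psi> (0, g) z = push P \<phi> g z" .
qed

lemma Hm_1:
  assumes g: "g \<in> Rset P le"
  shows "Hm P le \<phi> \<psi> (1, g) = push P \<psi> g"
proof
  fix z
  have "Hm P le \<phi> \<psi> (1, g) z = (\<Sum>x\<in>P. if \<psi> x = z then g x else 0)"
    unfolding Hm_def
  proof (rule sum.cong[OF refl])
    fix x assume x: "x \<in> P"
    have "Wt P le g x \<le> 1" "Wt P le g x = g x + Wp P le g x" "0 \<le> g x"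
      using Wt_le1[OF g, of x] Wt_split'[OF x, of g] g unfolding Rset_def by blast+
    then show "(if \<psi> x = z then min (Wt P le (snd (1, g)) x) (fst (1::real, g)) - min (Wp P le (snd (1, g)) x) (fst (1::real, g)) else 0) +
         (if \<phi> x = z then max (Wt P le (snd (1, g)) x) (fst (1::real, g)) - max (Wp P le (snd (1, g)) x) (fst (1::real, g)) else 0) =
         (if \<psi> x = z then g x else 0)" by (simp add: min_def max_def)
  qed
  also have "\<dots> = push P \<psi> g z" unfolding push_def using fin by (simp add: sum.inter_filter)
  finally show "Hm P le \<phi> \<psi> (1, g) z = push P \<psi> g z" .
qed

lemma push_homotopic:
  assumes phi: "\<And>x. x \<in> P \<Longrightarrow> \<phi> x \<in> P" and psi: "\<And>x. x \<in> P \<Longrightarrow> \<psi> x \<in> P"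
    and mphi: "\<And>x y. x \<in> P \<Longrightarrow> y \<in> P \<Longrightarrow> le x y \<Longrightarrow> le (\<phi> x) (\<phi> y)"
    and mpsi: "\<And>x y. x \<in> P \<Longrightarrow> y \<in> P \<Longrightarrow> le x y \<Longrightarrow> le (\<psi> x) (\<psi> y)"
    and pp: "\<And>x. x \<in> P \<Longrightarrow> le (\<phi> x) (\<psi> x)"
  shows "homotopic_with (\<lambda>_. True) (geom_real P le) (geom_real P le) (push P \<phi>) (push P \<psi>)"
proof -
  have "homotopic_with (\<lambda>_. True) (geom_real P le) (geom_real P le)
      (\<lambda>g. Hm P le \<phi> \<psi> (0, g)) (\<lambda>g. Hm P le \<phi> \<psi> (1, g))"
    unfolding homotopic_with_def
    by (rule exI[where x="Hm P le \<phi> \<psi>"]) (simp add: Hm_cont[OF assms])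
  then show ?thesis
    by (rule homotopic_with_eq) (auto simp: topspace_geom_real Hm_0 Hm_1)
qed

lemma push_id:
  assumes "g \<in> Rset P le" "\<And>x. x \<in> P \<Longrightarrow> f x = x"
  shows "push P f g = g"
proof
  fix z
  have "{x \<in> P. f x = z} = {x \<in> P. x = z}" using assms(2) by auto
  then have "push P f g z = sum g {x \<in> P. x = z}" unfolding push_def by simp
  also have "\<dots> = g z"
  proof (cases "z \<in> P")
    case True
    then have "{x \<in> P. x = z} = {z}" by auto
    then show ?thesis by simp
  next
    case False
    then have "{x \<in> P. x = z} = {}" by auto
    then show ?thesis using False assms(1) by (simp add: Rset_def)
  qed
  finally show "push P f g z = g z" .
qed

lemma push_const:
  assumes "g \<in> Rset P le" "\<And>x. x \<in> P \<Longrightarrow> f x = c"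
  shows "push P f g = (\<lambda>z. if z = c then 1 else 0)"
proof
  fix z
  have "{x \<in> P. f x = z} = (if z = c then P else {})" using assms(2) by auto
  then show "push P f g z = (if z = c then 1 else 0)"
    unfolding push_def using Rset_sumP[OF fin assms(1)] by simp
qed

lemma zigzag_contractible:
  assumes fP: "\<And>j x. x \<in> P \<Longrightarrow> f j x \<in> P"
    and mono: "\<And>j x y. x \<in> P \<Longrightarrow> y \<in> P \<Longrightarrow> le x y \<Longrightarrow> le (f j x) (f j y)"
    and f0: "\<And>x. x \<in> P \<Longrightarrow> f 0 x = x"
    and fm: "\<And>x. x \<in> P \<Longrightarrow> f m x = c"
    and step: "\<And>j. j < m \<Longrightarrow> (\<forall>x\<in>P. le (f j x) (f (Suc j) x)) \<or> (\<forall>x\<in>P. le (f (Suc j) x) (f j x))"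
  shows "contractible_space (geom_real P le)"
proof -
  let ?X = "geom_real P le"
  have H: "homotopic_with (\<lambda>_. True) ?X ?X id (push P (f j))" if "j \<le> m" for j
    using that
  proof (induction j)
    case 0
    show ?case
      by (rule homotopic_with_equal) (auto simp: topspace_geom_real push_id f0)
  next
    case (Suc j)
    then have j: "j < m" by simp
    have "homotopic_with (\<lambda>_. True) ?X ?X (push P (f j)) (push P (f (Suc j)))"
      using step[OF j]
    proof
      assume "\<forall>x\<in>P. le (f j x) (f (Suc j) x)"
      then show ?thesis by (intro push_homotopic) (auto intro: fP mono)
    next
      assume "\<forall>x\<in>P. le (f (Suc j) x) (f j x)"
      then have "homotopic_with (\<lambda>_. True) ?X ?X (push P (f (Suc j))) (push P (f j))"
        by (intro push_homotopic) (auto intro: fP mono)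
      then show ?thesis by (rule homotopic_with_symD)
    qed
    then show ?case using Suc.IH j homotopic_with_trans by fastforce
  qed
  have "homotopic_with (\<lambda>_. True) ?X ?X id (\<lambda>g. (\<lambda>z. if z = c then 1 else 0))"
    by (rule homotopic_with_eq[OF H[OF order_refl]]) (auto simp: topspace_geom_real push_const fm)
  then show ?thesis unfolding contractible_space_def by blast
qed

end



fun flip :: "sym \<Rightarrow> sym" where
  "flip S0 = S1" | "flip S1 = S0" | "flip SX = SX"

definition lab :: "sym \<Rightarrow> nat \<Rightarrow> sym" where
  "lab a i = (if even i then a else flip a)"

definition wf0 :: "nat \<Rightarrow> (nat \<Rightarrow> nat) \<Rightarrow> (nat \<Rightarrow> nat) \<Rightarrow> bool" where
  "wf0 K A B = ((\<forall>i<K. A i \<le> B i) \<and> (\<forall>i. Suc i < K \<longrightarrow> B i < A (Suc i)))"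

definition wfd :: "nat \<Rightarrow> nat \<Rightarrow> (nat \<Rightarrow> nat) \<Rightarrow> (nat \<Rightarrow> nat) \<Rightarrow> bool" where
  "wfd K N A B = (wf0 K A B \<and> (\<forall>i<K. B i < N))"

definition inb :: "nat \<Rightarrow> (nat \<Rightarrow> nat) \<Rightarrow> (nat \<Rightarrow> nat) \<Rightarrow> nat \<Rightarrow> nat \<Rightarrow> bool" where
  "inb K A B p i = (i < K \<and> A i \<le> p \<and> p \<le> B i)"

definition bval :: "nat \<Rightarrow> sym \<Rightarrow> (nat \<Rightarrow> nat) \<Rightarrow> (nat \<Rightarrow> nat) \<Rightarrow> nat \<Rightarrow> sym" where
  "bval K a A B p = (if \<exists>i. inb K A B p i then lab a (SOME i. inb K A B p i) else SX)"

definition bld :: "nat \<Rightarrow> nat \<Rightarrow> sym \<Rightarrow> (nat \<Rightarrow> nat) \<Rightarrow> (nat \<Rightarrow> nat) \<Rightarrow> sym list" where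
  "bld N K a A B = map (bval K a A B) [0..<N]"

lemma lab_ne: "a \<noteq> SX \<Longrightarrow> lab a i \<noteq> SX"
  by (cases a) (auto simp: lab_def)

lemma flip_ne: "a \<noteq> SX \<Longrightarrow> flip a \<noteq> a"
  by (cases a) auto

lemma flip_flip[simp]: "flip (flip a) = a"
  by (cases a) auto

lemma lab_eq_iff: "a \<noteq> SX \<Longrightarrow> lab a i = lab a j \<longleftrightarrow> (even i \<longleftrightarrow> even j)"
  by (cases a) (auto simp: lab_def)

lemma lab_Suc: "lab a (Suc i) = flip (lab a i)"
  by (auto simp: lab_def)

lemma two_vals: "x \<noteq> SX \<Longrightarrow> y \<noteq> SX \<Longrightarrow> x \<noteq> y \<Longrightarrow> x = flip y"
  by (cases x; cases y) auto

lemma wf0_lt: "wf0 K A B \<Longrightarrow> i < j \<Longrightarrow> j < K \<Longrightarrow> B i < A j"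
proof (induction j)
  case 0 then show ?case by simp
next
  case (Suc j)
  show ?case
  proof (cases "i = j")
    case True then show ?thesis using Suc.prems by (auto simp: wf0_def)
  next
    case False
    then have "B i < A j" using Suc by simp
    moreover have "A j \<le> B j" "B j < A (Suc j)" using Suc.prems by (auto simp: wf0_def)
    ultimately show ?thesis by simp
  qed
qed

lemma wf0_A_mono: "wf0 K A B \<Longrightarrow> i < j \<Longrightarrow> j < K \<Longrightarrow> A i < A j"
proof -
  assume a: "wf0 K A B" "i < j" "j < K"
  then have "A i \<le> B i" by (auto simp: wf0_def)
  then show ?thesis using wf0_lt[OF a] by linarith
qed

lemma wf0_B_mono: "wf0 K A B \<Longrightarrow> i < j \<Longrightarrow> j < K \<Longrightarrow> B i < B j"
  using wf0_lt[of K A B i j] by (auto simp: wf0_def)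

lemma wf0_A_le: "wf0 K A B \<Longrightarrow> i \<le> j \<Longrightarrow> j < K \<Longrightarrow> A i \<le> A j"
  using wf0_A_mono[of K A B i j] by (cases "i = j") auto

lemma wf0_B_le: "wf0 K A B \<Longrightarrow> i \<le> j \<Longrightarrow> j < K \<Longrightarrow> B i \<le> B j"
  using wf0_B_mono[of K A B i j] by (cases "i = j") auto

lemma inb_unique: "wf0 K A B \<Longrightarrow> inb K A B p i \<Longrightarrow> inb K A B p j \<Longrightarrow> i = j"
  unfolding inb_def by (metis linorder_neqE_nat not_le wf0_lt le_less_trans)

lemma bval_in: "wf0 K A B \<Longrightarrow> inb K A B p i \<Longrightarrow> bval K a A B p = lab a i"
  unfolding bval_def by (metis (mono_tags, lifting) inb_unique someI_ex)

lemma bval_out: "(\<And>i. \<not> inb K A B p i) \<Longrightarrow> bval K a A B p = SX"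
  unfolding bval_def by auto

lemma bval_cases: "wf0 K A B \<Longrightarrow> bval K a A B p = SX \<and> (\<forall>i. \<not> inb K A B p i) \<or> (\<exists>i. inb K A B p i \<and> bval K a A B p = lab a i)"
  using bval_in bval_out by metis

lemma bval_bit: "wf0 K A B \<Longrightarrow> a \<noteq> SX \<Longrightarrow> bval K a A B p \<noteq> SX \<Longrightarrow> \<exists>i. inb K A B p i \<and> bval K a A B p = lab a i"
  using bval_cases by metis

lemma bval_X: "wf0 K A B \<Longrightarrow> a \<noteq> SX \<Longrightarrow> bval K a A B p = SX \<longleftrightarrow> (\<forall>i. \<not> inb K A B p i)"
  using bval_in bval_out lab_ne by metis

lemma length_bld[simp]: "length (bld N K a A B) = N"
  by (simp add: bld_def)

lemma nth_bld[simp]: "p < N \<Longrightarrow> bld N K a A B ! p = bval K a A B p"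
  by (simp add: bld_def)

lemma wf_wf0: "wfd K N A B \<Longrightarrow> wf0 K A B"
  by (simp add: wfd_def)

locale twodata =
  fixes K N :: nat and a :: sym and A B A' B' :: "nat \<Rightarrow> nat"
  assumes w1: "wf0 K A B" and w2: "wf0 K A' B'" and aX: "a \<noteq> SX"
    and Nb: "\<And>i. i < K \<Longrightarrow> B' i < N"
    and H: "\<And>p. p < N \<Longrightarrow> bval K a A' B' p \<noteq> SX \<Longrightarrow> bval K a A B p = bval K a A' B' p"
begin

lemma blk: 
  assumes "inb K A' B' p i"
  shows "\<exists>j. inb K A B p j \<and> (even j \<longleftrightarrow> even i)"
proof -
  have p: "p < N" using assms Nb[of i] unfolding inb_def by linarith
  have v: "bval K a A' B' p = lab a i" using bval_in[OF w2 assms] .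
  then have "bval K a A B p = lab a i" using H[OF p] lab_ne[OF aX] by simp
  then obtain j where "inb K A B p j" "lab a j = lab a i"
    using bval_bit[OF w1 aX] lab_ne[OF aX] by metis
  then show ?thesis using lab_eq_iff[OF aX] by metis
qed

lemma claimA: "i < K \<Longrightarrow> \<exists>j. inb K A B (A' i) j \<and> i \<le> j \<and> (even j \<longleftrightarrow> even i)"
proof (induction i)
  case 0
  have "inb K A' B' (A' 0) 0" using 0 w2 by (auto simp: inb_def wf0_def)
  then show ?case using blk by blast
next
  case (Suc i)
  then obtain j0 where j0: "inb K A B (A' i) j0" "i \<le> j0" "even j0 \<longleftrightarrow> even i" by auto
  have "inb K A' B' (A' (Suc i)) (Suc i)" using Suc.prems w2 by (auto simp: inb_def wf0_def)
  then obtain j where j: "inb K A B (A' (Suc i)) j" "even j \<longleftrightarrow> even (Suc i)" using blk by blast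
  have lt: "A' i < A' (Suc i)" using wf0_A_mono[OF w2, of i "Suc i"] Suc.prems by simp
  have "j0 < j"
  proof (rule ccontr)
    assume "\<not> j0 < j"
    moreover have "j \<noteq> j0" using j(2) j0(3) by auto
    ultimately have "j < j0" by simp
    then have "B j < A j0" using wf0_lt[OF w1] j0(1) by (auto simp: inb_def)
    then show False using j(1) j0(1) lt by (auto simp: inb_def)
  qed
  then show ?case using j j0 by auto
qed

lemma claimB: "d < K \<Longrightarrow> \<exists>j. inb K A B (B' (K - 1 - d)) j \<and> j \<le> K - 1 - d \<and> (even j \<longleftrightarrow> even (K - 1 - d))"
proof (induction d)
  case 0
  have "inb K A' B' (B' (K - 1)) (K - 1)" using 0 w2 by (auto simp: inb_def wf0_def)
  then obtain j where "inb K A B (B' (K - 1)) j" "even j \<longleftrightarrow> even (K - 1)" using blk by blast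
  then show ?case by (auto simp: inb_def)
next
  case (Suc d)
  define i where "i = K - 1 - Suc d"
  have i1: "Suc i = K - 1 - d" "Suc i < K" using Suc.prems by (auto simp: i_def)
  then obtain j0 where j0: "inb K A B (B' (Suc i)) j0" "j0 \<le> Suc i" "even j0 \<longleftrightarrow> even (Suc i)"
    using Suc by auto
  have "inb K A' B' (B' i) i" using i1 w2 by (auto simp: inb_def wf0_def)
  then obtain j where j: "inb K A B (B' i) j" "even j \<longleftrightarrow> even i" using blk by blast
  have lt: "B' i < B' (Suc i)" using wf0_B_mono[OF w2, of i "Suc i"] i1 by simp
  have "j < j0"
  proof (rule ccontr)
    assume "\<not> j < j0"
    moreover have "j \<noteq> j0" using j(2) j0(3) by auto
    ultimately have "j0 < j" by simp
    then have "B j0 < A j" using wf0_lt[OF w1] j(1) by (auto simp: inb_def)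
    then show False using j(1) j0(1) lt by (auto simp: inb_def)
  qed
  then show ?case using j j0 i1 by (auto simp: i_def)
qed

lemma data_le: "i < K \<Longrightarrow> A i \<le> A' i \<and> B' i \<le> B i"
proof
  assume i: "i < K"
  obtain j where j: "inb K A B (A' i) j" "i \<le> j" using claimA[OF i] by blast
  then show "A i \<le> A' i" using wf0_A_le[OF w1 j(2)] by (auto simp: inb_def)
  define d where "d = K - 1 - i"
  have d: "d < K" "K - 1 - d = i" using i by (auto simp: d_def)
  obtain j' where j': "inb K A B (B' i) j'" "j' \<le> i" using claimB[OF d(1)] d(2) by auto
  then show "B' i \<le> B i" using wf0_B_le[OF w1 j'(2) i] by (auto simp: inb_def)
qed


end

lemma strle_data:
  assumes "wfd K N A B" "wfd K N A' B'" "a \<noteq> SX" "strle (bld N K a A B) (bld N K a A' B')" "i < K"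
  shows "A i \<le> A' i \<and> B' i \<le> B i"
proof -
  interpret twodata K N a A B A' B'
    using assms unfolding strle_def wfd_def by unfold_locales auto
  show ?thesis using data_le assms(5) .
qed

lemma data_strle:
  assumes "wfd K N A B" "wfd K N A' B'" "a \<noteq> SX" "\<And>i. i < K \<Longrightarrow> A i \<le> A' i \<and> B' i \<le> B i"
  shows "strle (bld N K a A B) (bld N K a A' B')"
  unfolding strle_def
proof (intro conjI allI impI)
  fix p assume p: "p < length (bld N K a A' B')"
  then have pN: "p < N" by simp
  have w1: "wf0 K A B" and w2: "wf0 K A' B'" using assms by (auto simp: wfd_def)
  show "bld N K a A B ! p = bld N K a A' B' ! p \<or> bld N K a A' B' ! p = SX"
  proof (cases "bval K a A' B' p = SX")
    case True then show ?thesis using pN by simp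
  next
    case False
    then obtain i where i: "inb K A' B' p i" "bval K a A' B' p = lab a i" using bval_bit[OF w2 assms(3)] by blast
    then have "inb K A B p i" using assms(4)[of i] by (auto simp: inb_def)
    then show ?thesis using bval_in[OF w1] i pN by simp
  qed
qed simp

lemma cat_nat: "0 < length s \<Longrightarrow> cat s (int k) = s ! (k mod length s)"
  unfolding cat_def by (simp add: zmod_int[symmetric] nat_int)

lemma cat_add: "0 < length s \<Longrightarrow> cat s (int i + int t) = s ! ((i + t) mod length s)"
  using cat_nat[of s "i + t"] by simp

lemma cat_pred: "0 < length s \<Longrightarrow> i < length s \<Longrightarrow> cat s (int i - 1) = s ! (if i = 0 then length s - 1 else i - 1)"
proof -
  assume a: "0 < length s" "i < length s"
  show ?thesis
  proof (cases "i = 0")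
    case True
    have "(-1::int) mod int (length s) = int (length s) - 1"
      using a(1) by (simp add: zmod_minus1)
    also have "int (length s) - 1 = int (length s - 1)" using a(1) by (cases "length s") auto
    finally have e: "(int 0 - 1) mod int (length s) = int (length s - 1)" by simp
    show ?thesis unfolding cat_def True e nat_int by simp
  next
    case False
    then have "int i - 1 = int (i - 1)" by simp
    then show ?thesis using False a cat_nat[of s "i - 1"] by simp
  qed
qed

lemma card_lab_part:
  assumes "a \<noteq> SX"
  shows "card {l. l < K \<and> lab a l = S0} + card {l. l < K \<and> lab a l = S1} = K"
proof -
  have "{l. l < K \<and> lab a l = S0} \<union> {l. l < K \<and> lab a l = S1} = {..<K}"
    using lab_ne[OF assms] by (auto, metis sym.exhaust)
  moreover have "card ({l. l < K \<and> lab a l = S0} \<union> {l. l < K \<and> lab a l = S1})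
     = card {l. l < K \<and> lab a l = S0} + card {l. l < K \<and> lab a l = S1}"
    by (rule card_Un_disjoint) auto
  ultimately show ?thesis by simp
qed

lemma card_lab:
  assumes "a \<noteq> SX" "c \<noteq> SX"
  shows "card {l. l < 2 * M \<and> lab a l = c} = M"
proof (induction M)
  case 0 then show ?case by simp
next
  case (Suc M)
  have e: "{l. l < 2 * Suc M \<and> lab a l = c} = {l. l < 2 * M \<and> lab a l = c} \<union> {l. (l = 2 * M \<or> l = Suc (2 * M)) \<and> lab a l = c}"
    by auto
  have one: "card {l. (l = 2 * M \<or> l = Suc (2 * M)) \<and> lab a l = c} = 1"
  proof (cases "c = a")
    case True
    then have "{l. (l = 2 * M \<or> l = Suc (2 * M)) \<and> lab a l = c} = {2 * M}"
      using flip_ne[OF assms(1)] by (auto simp: lab_def)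
    then show ?thesis by simp
  next
    case False
    then have "c = flip a" using two_vals assms by metis
    then have "{l. (l = 2 * M \<or> l = Suc (2 * M)) \<and> lab a l = c} = {Suc (2 * M)}"
      using flip_ne[OF assms(1)] by (auto simp: lab_def)
    then show ?thesis by simp
  qed
  have "card {l. l < 2 * Suc M \<and> lab a l = c} = card {l. l < 2 * M \<and> lab a l = c} + card {l. (l = 2 * M \<or> l = Suc (2 * M)) \<and> lab a l = c}"
    unfolding e by (rule card_Un_disjoint) auto
  then show ?case using Suc one by simp
qed

locale bdata =
  fixes K N :: nat and a :: sym and A B :: "nat \<Rightarrow> nat"
  assumes w: "wfd K N A B" and aX: "a \<noteq> SX" and N0: "0 < N"
    and NW: "(\<forall>i. \<not> inb K A B (N - 1) i) \<or> (\<forall>i. \<not> inb K A B 0 i)"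
begin

abbreviation "s \<equiv> bld N K a A B"

lemma w0: "wf0 K A B" using w by (simp add: wfd_def)

lemma Bn: "i < K \<Longrightarrow> B i < N" using w by (simp add: wfd_def)

lemma s_bit: "p < N \<Longrightarrow> s ! p \<noteq> SX \<longleftrightarrow> (\<exists>l. inb K A B p l)"
  using bval_X[OF w0 aX] by simp

lemma s_in: "inb K A B p l \<Longrightarrow> s ! p = lab a l"
  using bval_in[OF w0] Bn by (simp add: inb_def) (metis le_less_trans nth_bld bval_in[OF w0] inb_def)

lemma inb_lt: "inb K A B p l \<Longrightarrow> p < N"
  using Bn by (auto simp: inb_def intro: le_less_trans)

lemma nblocks_bld:
  assumes c: "c \<noteq> SX"
  shows "nblocks s c = card {l. l < K \<and> lab a l = c}"
proof -
  have notall: "\<not> (s \<noteq> [] \<and> (\<forall>i<length s. s ! i = c))"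
  proof
    assume h: "s \<noteq> [] \<and> (\<forall>i<length s. s ! i = c)"
    from NW show False
    proof
      assume "\<forall>i. \<not> inb K A B (N - 1) i"
      then have "s ! (N - 1) = SX" using s_bit[of "N - 1"] N0 by auto
      then show False using h N0 c by auto
    next
      assume "\<forall>i. \<not> inb K A B 0 i"
      then have "s ! 0 = SX" using s_bit[of 0] N0 by auto
      then show False using h N0 c by auto
    qed
  qed
  have L: "0 < length s" using N0 by simp
  have seteq: "{i. i < length s \<and> cat s (int i) = c \<and> cat s (int i - 1) \<noteq> c} = A ` {l. l < K \<and> lab a l = c}"
  proof (intro equalityI subsetI)
    fix i assume "i \<in> {i. i < length s \<and> cat s (int i) = c \<and> cat s (int i - 1) \<noteq> c}"
    then have i: "i < N" "s ! i = c" "cat s (int i - 1) \<noteq> c" using cat_nat[OF L, of i] by auto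
    then obtain l where l: "inb K A B i l" using s_bit c by metis
    then have lc: "lab a l = c" using s_in[OF l] i(1,2) by simp
    have "i = A l"
    proof (rule ccontr)
      assume "i \<noteq> A l"
      then have "A l < i" using l by (auto simp: inb_def)
      then have "inb K A B (i - 1) l" using l by (auto simp: inb_def)
      then have "s ! (i - 1) = c" using s_in lc by simp
      moreover have "cat s (int i - 1) = s ! (i - 1)" using cat_pred[OF L, of i] i \<open>A l < i\<close> by simp
      ultimately show False using i by simp
    qed
    then show "i \<in> A ` {l. l < K \<and> lab a l = c}" using l lc by (auto simp: inb_def)
  next
    fix i assume "i \<in> A ` {l. l < K \<and> lab a l = c}"
    then obtain l where l: "l < K" "lab a l = c" "i = A l" by auto
    have il: "inb K A B i l" using l w0 by (auto simp: inb_def wf0_def)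
    have iN: "i < N" using inb_lt[OF il] .
    have si: "s ! i = c" using s_in[OF il] l by simp
    have pred: "cat s (int i - 1) \<noteq> c"
    proof (cases "i = 0")
      case True
      then have "\<not> (\<forall>i. \<not> inb K A B 0 i)" using il by auto
      then have "\<forall>i. \<not> inb K A B (N - 1) i" using NW by auto
      then have "s ! (N - 1) = SX" using s_bit[of "N - 1"] N0 by auto
      then show ?thesis using cat_pred[OF L, of i] True N0 c by simp
    next
      case False
      have cp: "cat s (int i - 1) = s ! (i - 1)" using cat_pred[OF L, of i] False iN by simp
      show ?thesis
      proof (cases "\<exists>l'. inb K A B (i - 1) l'")
        case False
        then have "s ! (i - 1) = SX" using s_bit[of "i - 1"] iN by auto
        then show ?thesis using cp c by simp
      next
        case True
        then obtain l' where l': "inb K A B (i - 1) l'" by blast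
        have "l' < l"
        proof (rule ccontr)
          assume "\<not> l' < l"
          then have "A l \<le> A l'" using wf0_A_le[OF w0, of l l'] l' by (auto simp: inb_def)
          then show False using l' l(3) False by (auto simp: inb_def)
        qed
        have "l' = l - 1"
        proof (rule ccontr)
          assume "l' \<noteq> l - 1"
          then have "l' < l - 1" using \<open>l' < l\<close> by simp
          then have "B l' < A (l - 1)" "A (l - 1) \<le> B (l - 1)" "B (l - 1) < A l"
            using wf0_lt[OF w0, of l' "l - 1"] wf0_lt[OF w0, of "l - 1" l] l(1) w0 \<open>l' < l\<close>
            by (auto simp: wf0_def)
          then show False using l' l(3) by (auto simp: inb_def)
        qed
        then have "s ! (i - 1) = lab a (l - 1)" using s_in[OF l'] by simp
        moreover have "lab a (l - 1) \<noteq> lab a l" using lab_eq_iff[OF aX] \<open>l' < l\<close> by auto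
        ultimately show ?thesis using cp l(2) by simp
      qed
    qed
    show "i \<in> {i. i < length s \<and> cat s (int i) = c \<and> cat s (int i - 1) \<noteq> c}"
      using iN si pred cat_nat[OF L, of i] by simp
  qed
  have inj: "inj_on A {l. l < K \<and> lab a l = c}"
    by (rule inj_onI) (metis (mono_tags, lifting) mem_Collect_eq linorder_neqE_nat wf0_A_mono[OF w0] less_irrefl)
  have "nblocks s c = card {i. i < length s \<and> cat s (int i) = c \<and> cat s (int i - 1) \<noteq> c}"
    unfolding nblocks_def by (rule if_not_P) (rule notall)
  also have "\<dots> = card (A ` {l. l < K \<and> lab a l = c})" by (simp only: seteq)
  also have "\<dots> = card {l. l < K \<and> lab a l = c}" by (rule card_image[OF inj])
  finally show ?thesis .
qed


lemma adj:
  assumes "Suc p < q" "q < N" "inb K A B p j" "inb K A B q j'" "\<And>r. p < r \<Longrightarrow> r < q \<Longrightarrow> s ! r = SX"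
  shows "j' = Suc j"
proof -
  have jK: "j < K" "j' < K" using assms by (auto simp: inb_def)
  have "j' \<noteq> j"
  proof
    assume "j' = j"
    then have "inb K A B (Suc p) j" using assms by (auto simp: inb_def)
    then have "s ! Suc p \<noteq> SX" using s_bit assms by (meson inb_lt)
    then show False using assms(1,5) by simp
  qed
  moreover have "\<not> j' < j"
  proof
    assume "j' < j"
    then have "B j' < A j" using wf0_lt[OF w0] jK by simp
    then show False using assms by (auto simp: inb_def)
  qed
  moreover have "\<not> Suc j < j'"
  proof
    assume h: "Suc j < j'"
    have "B j < A (Suc j)" using wf0_lt[OF w0, of j "Suc j"] h jK by simp
    moreover have "A (Suc j) < A j'" using wf0_A_mono[OF w0 h] jK by simp
    moreover have i: "inb K A B (A (Suc j)) (Suc j)" using h jK w0 by (auto simp: inb_def wf0_def)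
    ultimately have pos: "p < A (Suc j)" "A (Suc j) < q" using assms(3,4) by (auto simp: inb_def)
    have "s ! (A (Suc j)) \<noteq> SX" using s_in[OF i] lab_ne[OF aX] by simp
    then show False using assms(5)[OF pos] by simp
  qed
  ultimately show ?thesis by simp
qed

lemma lastb:
  assumes "inb K A B p j" "\<And>r. p < r \<Longrightarrow> r < N \<Longrightarrow> s ! r = SX"
  shows "j = K - 1"
proof (rule ccontr)
  assume "j \<noteq> K - 1"
  then have h: "Suc j < K" using assms by (auto simp: inb_def)
  have "B j < A (Suc j)" using wf0_lt[OF w0, of j "Suc j"] h by simp
  moreover have i: "inb K A B (A (Suc j)) (Suc j)" using h w0 by (auto simp: inb_def wf0_def)
  ultimately have pos: "p < A (Suc j)" "A (Suc j) < N" using assms(1) inb_lt[OF i] by (auto simp: inb_def)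
  have "s ! (A (Suc j)) \<noteq> SX" using s_in[OF i] lab_ne[OF aX] by simp
  then show False using assms(2)[OF pos] by simp
qed

lemma firstb:
  assumes "inb K A B q j" "\<And>r. r < q \<Longrightarrow> s ! r = SX"
  shows "j = 0"
proof (rule ccontr)
  assume "j \<noteq> 0"
  then have h: "0 < j" "j < K" using assms by (auto simp: inb_def)
  have "A 0 < A j" using wf0_A_mono[OF w0 h] .
  moreover have i: "inb K A B (A 0) 0" using h w0 by (auto simp: inb_def wf0_def)
  ultimately have pos: "A 0 < q" using assms(1) by (auto simp: inb_def)
  have "s ! (A 0) \<noteq> SX" using s_in[OF i] lab_ne[OF aX] by simp
  then show False using assms(2)[OF pos] by simp
qed

lemma finA:
  assumes "Suc p < q" "q < N" "s ! p \<noteq> SX" "s ! q \<noteq> SX" "\<And>r. p < r \<Longrightarrow> r < q \<Longrightarrow> s ! r = SX"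
  shows "s ! p \<noteq> s ! q"
proof -
  obtain j where j: "inb K A B p j" using s_bit assms by (meson Suc_lessD less_trans)
  obtain j' where j': "inb K A B q j'" using s_bit assms by meson
  have "j' = Suc j" using adj[OF assms(1,2) j j' assms(5)] .
  then show ?thesis using s_in[OF j] s_in[OF j'] lab_eq_iff[OF aX] by simp
qed

lemma finB:
  assumes evK: "even K" and K0: "0 < K"
    and "p < N" "q < N" "s ! p \<noteq> SX" "s ! q \<noteq> SX"
    "\<And>r. p < r \<Longrightarrow> r < N \<Longrightarrow> s ! r = SX" "\<And>r. r < q \<Longrightarrow> s ! r = SX"
  shows "s ! p \<noteq> s ! q"
proof -
  obtain j where j: "inb K A B p j" using s_bit assms by meson
  obtain j' where j': "inb K A B q j'" using s_bit assms by meson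
  have "j = K - 1" using lastb[OF j assms(7)] .
  moreover have "j' = 0" using firstb[OF j' assms(8)] .
  ultimately show ?thesis using s_in[OF j] s_in[OF j'] lab_eq_iff[OF aX] evK K0 by simp
qed

lemma xok:
  assumes evK: "even K" and K0: "0 < K"
  shows "xblocks_ok s"
  unfolding xblocks_ok_def
proof (intro allI impI, elim conjE)
  fix i d
  assume iN: "i < length s" and d0: "0 < d" and h1: "cat s (int i - 1) \<noteq> SX"
    and h2: "\<forall>t<d. cat s (int i + int t) = SX" and h3: "cat s (int i + int d) \<noteq> SX"
  have L: "0 < length s" "length s = N" using N0 by auto
  have h2': "s ! ((i + t) mod N) = SX" if "t < d" for t using h2 that cat_add[OF L(1), of i t] L(2) by simp
  have h3': "cat s (int i + int d) = s ! ((i + d) mod N)" using cat_add[OF L(1), of i d] L(2) by simp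
  show "cat s (int i - 1) \<noteq> cat s (int i + int d)"
  proof (cases "i = 0")
    case True
    have c1: "cat s (int i - 1) = s ! (N - 1)" using cat_pred[OF L(1), of 0] True L(2) N0 by simp
    have dN: "d < N"
    proof (rule ccontr)
      assume "\<not> d < N"
      then have "s ! ((i + (N - 1)) mod N) = SX" using h2'[of "N - 1"] N0 by simp
      then show False using h1 c1 True N0 by simp
    qed
    have c2: "cat s (int i + int d) = s ! d" using h3' True dN by simp
    show ?thesis unfolding c1 c2
    proof (rule finB[OF evK K0])
      show "N - 1 < N" "d < N" using N0 dN by auto
      show "s ! (N - 1) \<noteq> SX" "s ! d \<noteq> SX" using h1 h3 c1 c2 by auto
      show "s ! r = SX" if "N - 1 < r" "r < N" for r using that by simp
      show "s ! r = SX" if "r < d" for r using h2'[OF that] True that dN by simp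
    qed
  next
    case False
    have c1: "cat s (int i - 1) = s ! (i - 1)" using cat_pred[OF L(1)] iN False L(2) by simp
    show ?thesis
    proof (cases "i + d < N")
      case True
      have c2: "cat s (int i + int d) = s ! (i + d)" using h3' True by (simp only: mod_less)
      show ?thesis unfolding c1 c2
      proof (rule finA)
        show "Suc (i - 1) < i + d" "i + d < N" using False d0 True by linarith+
        show "s ! (i - 1) \<noteq> SX" "s ! (i + d) \<noteq> SX" using h1 h3 c1 c2 by auto
        show "s ! r = SX" if "i - 1 < r" "r < i + d" for r
        proof -
          have t: "r - i < d" using that False by linarith
          have "i + (r - i) = r" using that False by linarith
          moreover have "r < N" using that True by linarith
          ultimately have "(i + (r - i)) mod N = r" by simp
          then show ?thesis using h2'[OF t] by simp
        qed
      qed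
    next
      case False2: False
      have dN: "d < N"
      proof (rule ccontr)
        assume "\<not> d < N"
        then have t: "N - 1 < d" using N0 by linarith
        have e1: "i + (N - 1) = (i - 1) + N" using False N0 by linarith
        have e2: "i - 1 < N" using iN L(2) by linarith
        have "(i + (N - 1)) mod N = i - 1" unfolding e1 using e2 by simp
        then have "s ! (i - 1) = SX" using h2'[OF t] by simp
        then show False using h1 c1 by simp
      qed
      have qe: "(i + d) mod N = i + d - N"
      proof -
        have "i + d = (i + d - N) + N" "i + d - N < N" using False2 dN iN L(2) by linarith+
        then show ?thesis by (metis mod_add_self2 mod_less)
      qed
      have c2: "cat s (int i + int d) = s ! (i + d - N)" using h3' qe by simp
      show ?thesis unfolding c1 c2
      proof (rule finB[OF evK K0])
        show "i - 1 < N" "i + d - N < N" using iN L(2) dN by linarith+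
        show "s ! (i - 1) \<noteq> SX" "s ! (i + d - N) \<noteq> SX" using h1 h3 c1 c2 by auto
        show "s ! r = SX" if "i - 1 < r" "r < N" for r
        proof -
          have t: "r - i < d" using that False False2 by linarith
          have "i + (r - i) = r" using that False by linarith
          then have "(i + (r - i)) mod N = r" using that(2) by simp
          then show ?thesis using h2'[OF t] by simp
        qed
        show "s ! r = SX" if "r < i + d - N" for r
        proof -
          have t: "N - i + r < d" using that iN L(2) by linarith
          have e1: "i + (N - i + r) = r + N" using iN L(2) by linarith
          have e2: "r < N" using that dN iN L(2) by linarith
          have "(i + (N - i + r)) mod N = r" unfolding e1 using e2 by simp
          then show ?thesis using h2'[OF t] by simp
        qed
      qed
    qed
  qed
qed

lemma bld_Str:
  assumes "K = 2 * M" "0 < M"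
  shows "s \<in> Str N M"
proof -
  have "nblocks s S0 = M" "nblocks s S1 = M"
    using nblocks_bld card_lab[OF aX] assms(1) by auto
  moreover have "xblocks_ok s" using xok assms by simp
  ultimately show ?thesis unfolding Str_def by simp
qed

end


definition Lin :: "sym list \<Rightarrow> bool" where
  "Lin w = (\<forall>i j. Suc i < j \<longrightarrow> j < length w \<longrightarrow> w ! i \<noteq> SX \<longrightarrow> (\<forall>k. i < k \<longrightarrow> k < j \<longrightarrow> w ! k = SX) \<longrightarrow> w ! i \<noteq> w ! j)"

lemma bval_cong:
  "(\<And>i. inb K A B p i = inb K' A' B' p i) \<Longrightarrow> bval K a A B p = bval K' a A' B' p"
proof -
  assume "\<And>i. inb K A B p i = inb K' A' B' p i"
  then have "inb K A B p = inb K' A' B' p" by (rule ext)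
  then show ?thesis unfolding bval_def by auto
qed

lemma wf_mono_N: "wfd K N A B \<Longrightarrow> N \<le> N' \<Longrightarrow> wfd K N' A B"
  unfolding wfd_def by (auto intro: less_le_trans)

lemma decomp: "Lin w \<Longrightarrow> \<exists>K a A B. wfd K (length w) A B \<and> a \<noteq> SX \<and> bld (length w) K a A B = w"
proof (induction w rule: rev_induct)
  case Nil
  show ?case by (rule exI[of _ 0], rule exI[of _ S0]) (auto simp: wfd_def wf0_def bld_def)
next
  case (snoc x w)
  define n where "n = length w"
  have Lw: "Lin w" unfolding Lin_def
  proof (intro allI impI)
    fix i j assume h: "Suc i < j" "j < length w" "w ! i \<noteq> SX" "\<forall>k. i < k \<longrightarrow> k < j \<longrightarrow> w ! k = SX"
    have "(w @ [x]) ! i \<noteq> (w @ [x]) ! j"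
      using snoc.prems[unfolded Lin_def, rule_format, of i j] h by (auto simp: nth_append)
    then show "w ! i \<noteq> w ! j" using h by (simp add: nth_append)
  qed
  obtain K a A B where IH: "wfd K n A B" "a \<noteq> SX" "bld n K a A B = w" using snoc.IH[OF Lw] n_def by blast
  have w0: "wf0 K A B" using IH(1) by (simp add: wfd_def)
  have wp: "w ! p = bval K a A B p" if "p < n" for p using IH(3) that by auto
  have Bn: "B i < n" if "i < K" for i using IH(1) that by (simp add: wfd_def)
  have len: "length (w @ [x]) = Suc n" using n_def by simp
  show ?case
  proof (cases "x = SX")
    case True
    have "bld (Suc n) K a A B = w @ [x]"
    proof (rule nth_equalityI)
      show "length (bld (Suc n) K a A B) = length (w @ [x])" using len by simp
      fix p assume "p < length (bld (Suc n) K a A B)"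
      then have p: "p < Suc n" by simp
      show "bld (Suc n) K a A B ! p = (w @ [x]) ! p"
      proof (cases "p < n")
        case True then show ?thesis using wp p by (simp add: nth_append n_def)
      next
        case False
        then have "p = n" using p by simp
        moreover have "\<And>i. \<not> inb K A B n i" using Bn unfolding inb_def by (meson leD)
        ultimately show ?thesis using bval_out \<open>x = SX\<close> by (simp add: nth_append n_def)
      qed
    qed
    then show ?thesis using IH wf_mono_N[OF IH(1), of "Suc n"] len by (metis le_add2 plus_1_eq_Suc)
  next
    case xb: False
    show ?thesis
    proof (cases "K = 0")
      case True
      define A' where "A' = (\<lambda>_::nat. n)"
      have wf1: "wfd 1 (Suc n) A' A'" by (simp add: wfd_def wf0_def A'_def)
      have "bld (Suc n) 1 x A' A' = w @ [x]"
      proof (rule nth_equalityI)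
        show "length (bld (Suc n) 1 x A' A') = length (w @ [x])" using len by simp
        fix p assume "p < length (bld (Suc n) 1 x A' A')"
        then have p: "p < Suc n" by simp
        show "bld (Suc n) 1 x A' A' ! p = (w @ [x]) ! p"
        proof (cases "p < n")
          case True
          then have "bval 1 x A' A' p = SX" by (intro bval_out) (auto simp: inb_def A'_def)
          moreover have "bval K a A B p = SX" using \<open>K = 0\<close> by (intro bval_out) (auto simp: inb_def)
          ultimately show ?thesis using wp True p by (simp add: nth_append n_def)
        next
          case False
          then have "p = n" using p by simp
          moreover have "inb 1 A' A' n 0" by (simp add: inb_def A'_def)
          ultimately show ?thesis using bval_in[of 1 A' A' n 0 x] wf1 by (simp add: nth_append n_def wfd_def lab_def)
        qed
      qed
      then show ?thesis using wf1 xb len by metis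
    next
      case K0: False
      define l where "l = K - 1"
      have lK: "l < K" "K = Suc l" using K0 by (auto simp: l_def)
      show ?thesis
      proof (cases "B l = n - 1 \<and> lab a l = x")
        case True
        define B' where "B' = B(l := n)"
        have wfB: "wfd K (Suc n) A B'"
          using IH(1) lK unfolding wfd_def wf0_def B'_def
          by (auto simp: less_Suc_eq) (metis le_trans less_imp_le_nat)
        have "bld (Suc n) K a A B' = w @ [x]"
        proof (rule nth_equalityI)
          show "length (bld (Suc n) K a A B') = length (w @ [x])" using len by simp
          fix p assume "p < length (bld (Suc n) K a A B')"
          then have p: "p < Suc n" by simp
          show "bld (Suc n) K a A B' ! p = (w @ [x]) ! p"
          proof (cases "p < n")
            case True
            have "bval K a A B' p = bval K a A B p"
              by (rule bval_cong) (use True \<open>B l = n - 1 \<and> lab a l = x\<close> in \<open>auto simp: inb_def B'_def\<close>)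
            then show ?thesis using wp True p by (simp add: nth_append n_def)
          next
            case False
            then have "p = n" using p by simp
            moreover have "inb K A B' n l"
            proof -
              have "A l \<le> B l" using lK w0 by (simp add: wf0_def)
              then show ?thesis using lK Bn[of l] unfolding inb_def B'_def by simp
            qed
            ultimately show ?thesis using bval_in[OF _ \<open>inb K A B' n l\<close>] wfB True
              by (simp add: nth_append n_def wfd_def)
          qed
        qed
        then show ?thesis using wfB IH(2) len by metis
      next
        case False
        define A' where "A' = A(K := n)"
        define B' where "B' = B(K := n)"
        have lx: "lab a l \<noteq> x"
        proof (cases "B l = n - 1")
          case True then show ?thesis using False by simp
        next
          case Bl: False
          have Blt: "Suc (B l) < n" using Bn[OF lK(1)] Bl by simp
          have il: "inb K A B (B l) l" using lK w0 by (auto simp: inb_def wf0_def)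
          have wB: "w ! (B l) = lab a l" using wp[of "B l"] bval_in[OF w0 il] Bn[OF lK(1)] by simp
          have between: "w ! k = SX" if "B l < k" "k < n" for k
          proof -
            have "\<And>i. \<not> inb K A B k i"
            proof
              fix i assume "inb K A B k i"
              then have "i \<le> l" "k \<le> B i" using lK by (auto simp: inb_def)
              then show False using wf0_B_le[OF w0 \<open>i \<le> l\<close> lK(1)] that by simp
            qed
            then show ?thesis using wp[OF that(2)] bval_out by simp
          qed
          have "(w @ [x]) ! (B l) \<noteq> (w @ [x]) ! n"
            using snoc.prems[unfolded Lin_def, rule_format, of "B l" n] Blt len between wB lab_ne[OF IH(2)]
            by (auto simp: nth_append n_def)
          then show ?thesis using wB Blt by (simp add: nth_append n_def)
        qed
        have labK: "lab a K = x"
          using lK lx two_vals[OF xb lab_ne[OF IH(2)] lx[symmetric]] lab_Suc by simp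
        have wfN: "wfd (Suc K) (Suc n) A' B'"
          using IH(1) lK Bn unfolding wfd_def wf0_def A'_def B'_def
          by (auto simp: less_Suc_eq) 
        have "bld (Suc n) (Suc K) a A' B' = w @ [x]"
        proof (rule nth_equalityI)
          show "length (bld (Suc n) (Suc K) a A' B') = length (w @ [x])" using len by simp
          fix p assume "p < length (bld (Suc n) (Suc K) a A' B')"
          then have p: "p < Suc n" by simp
          show "bld (Suc n) (Suc K) a A' B' ! p = (w @ [x]) ! p"
          proof (cases "p < n")
            case True
            have "bval (Suc K) a A' B' p = bval K a A B p"
              by (rule bval_cong) (use True in \<open>auto simp: inb_def A'_def B'_def less_Suc_eq\<close>)
            then show ?thesis using wp True p by (simp add: nth_append n_def)
          next
            case False
            then have "p = n" using p by simp
            moreover have iK: "inb (Suc K) A' B' n K" by (simp add: inb_def A'_def B'_def)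
            ultimately show ?thesis using bval_in[OF _ iK] wfN labK
              by (simp add: nth_append n_def wfd_def)
          qed
        qed
        then show ?thesis using wfN IH(2) len by metis
      qed
    qed
  qed
qed


lemma Lin_of_Str:
  assumes "s \<in> Str N M"
  shows "Lin s"
  unfolding Lin_def
proof (intro allI impI)
  fix i j assume h: "Suc i < j" "j < length s" "s ! i \<noteq> SX" "\<forall>k. i < k \<longrightarrow> k < j \<longrightarrow> s ! k = SX"
  show "s ! i \<noteq> s ! j"
  proof (cases "s ! j = SX")
    case True then show ?thesis using h by simp
  next
    case False
    have xo: "xblocks_ok s" using assms by (simp add: Str_def)
    have L: "0 < length s" using h(2) by linarith
    define d where "d = j - Suc i"
    have c1: "cat s (int (Suc i) - 1) = s ! i" using cat_pred[OF L, of "Suc i"] h by simp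
    have c2: "cat s (int (Suc i) + int t) = SX" if "t < d" for t
    proof -
      have "Suc i + t < length s" "i < Suc i + t" "Suc i + t < j" using that h by (auto simp: d_def)
      then show ?thesis using cat_add[OF L, of "Suc i" t] h(4) by simp
    qed
    have c3: "cat s (int (Suc i) + int d) = s ! j"
    proof -
      have "Suc i + d = j" using h by (simp add: d_def)
      then show ?thesis using cat_add[OF L, of "Suc i" d] h by simp
    qed
    have "cat s (int (Suc i) - 1) \<noteq> cat s (int (Suc i) + int d)"
      using xo[unfolded xblocks_ok_def, rule_format, of "Suc i" d] h c1 c2 c3 False
      by (auto simp: d_def)
    then show ?thesis using c1 c3 by simp
  qed
qed

definition D1 :: "nat \<Rightarrow> nat \<Rightarrow> ((nat \<Rightarrow> nat) \<times> (nat \<Rightarrow> nat)) set" where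
  "D1 K N = {(A, B). wfd K N A B \<and> A 0 = 0 \<and> B (K - 1) < N - 1}"

definition D2 :: "nat \<Rightarrow> nat \<Rightarrow> ((nat \<Rightarrow> nat) \<times> (nat \<Rightarrow> nat)) set" where
  "D2 K N = {(A, B). wfd K N A B \<and> 0 < A 0 \<and> B (K - 1) = N - 1}"

lemma K_eq:
  assumes "wfd K N A B" "a \<noteq> SX" "0 < N" "(\<forall>i. \<not> inb K A B (N - 1) i) \<or> (\<forall>i. \<not> inb K A B 0 i)"
    "bld N K a A B \<in> Str N M"
  shows "K = 2 * M"
proof -
  interpret bdata K N a A B using assms by unfold_locales auto
  have "card {l. l < K \<and> lab a l = S0} = M" "card {l. l < K \<and> lab a l = S1} = M"
    using nblocks_bld assms(5) by (auto simp: Str_def)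
  then show ?thesis using card_lab_part[OF assms(2), of K] by simp
qed

lemma Str_aX:
  assumes a: "a \<noteq> SX" and M: "0 < M" "2 * M < N"
  shows "Str_ab N M a SX = (\<lambda>(A, B). bld N (2 * M) a A B) ` D1 (2 * M) N"
proof (intro equalityI subsetI)
  fix s assume "s \<in> (\<lambda>(A, B). bld N (2 * M) a A B) ` D1 (2 * M) N"
  then obtain A B where AB: "wfd (2 * M) N A B" "A 0 = 0" "B (2 * M - 1) < N - 1" "s = bld N (2 * M) a A B"
    by (auto simp: D1_def)
  have w0: "wf0 (2 * M) A B" using AB by (simp add: wfd_def)
  have nw: "\<forall>i. \<not> inb (2 * M) A B (N - 1) i"
  proof (intro allI notI)
    fix i assume "inb (2 * M) A B (N - 1) i"
    then have "N - 1 \<le> B i" "i \<le> 2 * M - 1" "i < 2 * M" by (auto simp: inb_def)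
    then show False using wf0_B_le[OF w0 \<open>i \<le> 2 * M - 1\<close>] AB(3) M by simp
  qed
  interpret bdata "2 * M" N a A B using AB(1) a M nw by unfold_locales auto
  have "s \<in> Str N M" using bld_Str M AB(4) by simp
  moreover have "s ! 0 = a"
  proof -
    have "inb (2 * M) A B 0 0" using AB(2) w0 M by (auto simp: inb_def wf0_def)
    then show ?thesis using s_in AB(4) by (simp add: lab_def)
  qed
  moreover have "s ! (N - 1) = SX" using s_bit[of "N - 1"] nw AB(4) M by auto
  ultimately show "s \<in> Str_ab N M a SX" by (simp add: Str_ab_def)
next
  fix s assume s: "s \<in> Str_ab N M a SX"
  then have sS: "s \<in> Str N M" "s ! 0 = a" "s ! (N - 1) = SX" "length s = N" by (auto simp: Str_ab_def Str_def)
  obtain K a' A B where d: "wfd K N A B" "a' \<noteq> SX" "bld N K a' A B = s"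
    using decomp[OF Lin_of_Str[OF sS(1)]] sS(4) by metis
  have w0: "wf0 K A B" using d by (simp add: wfd_def)
  have N0: "0 < N" using M by simp
  have nw: "\<forall>i. \<not> inb K A B (N - 1) i"
    using bval_X[OF w0 d(2), of "N - 1"] sS(3) d(3) N0 by auto
  interpret bdata K N a' A B using d nw N0 by unfold_locales auto
  have K: "K = 2 * M" using K_eq[OF d(1,2) N0] nw d(3) sS(1) by simp
  obtain l where l: "inb K A B 0 l" using s_bit[of 0] sS(2) a d(3) N0 by auto
  have l0: "l = 0"
  proof (rule ccontr)
    assume "l \<noteq> 0"
    then have "A 0 < A l" using wf0_A_mono[OF w0, of 0 l] l by (auto simp: inb_def)
    then show False using l by (auto simp: inb_def)
  qed
  have A0: "A 0 = 0" using l l0 by (auto simp: inb_def)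
  have aa: "a' = a" using s_in[OF l] l0 sS(2) d(3) by (simp add: lab_def)
  have "B (K - 1) < N - 1"
  proof -
    have "B (K - 1) < N" using d(1) K M by (simp add: wfd_def)
    moreover have "B (K - 1) \<noteq> N - 1"
    proof
      assume "B (K - 1) = N - 1"
      moreover have "A (K - 1) \<le> B (K - 1)" using w0 K M by (simp add: wf0_def)
      ultimately have "inb K A B (N - 1) (K - 1)" using K M by (simp add: inb_def)
      then show False using nw by blast
    qed
    ultimately show ?thesis by simp
  qed
  then have "(A, B) \<in> D1 (2 * M) N" using d(1) A0 K by (simp add: D1_def)
  moreover have "s = (\<lambda>(A, B). bld N (2 * M) a A B) (A, B)" using d(3) aa K by simp
  ultimately show "s \<in> (\<lambda>(A, B). bld N (2 * M) a A B) ` D1 (2 * M) N" by (rule rev_image_eqI)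
qed

lemma Str_Xa:
  assumes a: "a \<noteq> SX" and M: "0 < M" "2 * M < N"
  shows "Str_ab N M SX a = (\<lambda>(A, B). bld N (2 * M) (flip a) A B) ` D2 (2 * M) N"
proof (intro equalityI subsetI)
  have fa: "flip a \<noteq> SX" using a by (cases a) auto
  fix s assume "s \<in> (\<lambda>(A, B). bld N (2 * M) (flip a) A B) ` D2 (2 * M) N"
  then obtain A B where AB: "wfd (2 * M) N A B" "0 < A 0" "B (2 * M - 1) = N - 1" "s = bld N (2 * M) (flip a) A B"
    by (auto simp: D2_def)
  have w0: "wf0 (2 * M) A B" using AB by (simp add: wfd_def)
  have nw: "\<forall>i. \<not> inb (2 * M) A B 0 i"
  proof (intro allI notI)
    fix i assume "inb (2 * M) A B 0 i"
    then have "A i \<le> 0" "0 \<le> i" "i < 2 * M" by (auto simp: inb_def)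
    then show False using wf0_A_le[OF w0 \<open>0 \<le> i\<close>] AB(2) by simp
  qed
  interpret bdata "2 * M" N "flip a" A B using AB(1) fa M nw by unfold_locales auto
  have "s \<in> Str N M" using bld_Str M AB(4) by simp
  moreover have "s ! 0 = SX" using s_bit[of 0] nw AB(4) M by auto
  moreover have "s ! (N - 1) = a"
  proof -
    have "A (2 * M - 1) \<le> B (2 * M - 1)" using w0 M by (simp add: wf0_def)
    then have "inb (2 * M) A B (N - 1) (2 * M - 1)" using AB(3) M by (simp add: inb_def)
    moreover have "odd (2 * M - 1)" using M by simp
    ultimately show ?thesis using s_in AB(4) by (simp add: lab_def)
  qed
  ultimately show "s \<in> Str_ab N M SX a" by (simp add: Str_ab_def)
next
  fix s assume s: "s \<in> Str_ab N M SX a"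
  then have sS: "s \<in> Str N M" "s ! 0 = SX" "s ! (N - 1) = a" "length s = N" by (auto simp: Str_ab_def Str_def)
  obtain K a' A B where d: "wfd K N A B" "a' \<noteq> SX" "bld N K a' A B = s"
    using decomp[OF Lin_of_Str[OF sS(1)]] sS(4) by metis
  have w0: "wf0 K A B" using d by (simp add: wfd_def)
  have N0: "0 < N" using M by simp
  have nw: "\<forall>i. \<not> inb K A B 0 i"
    using bval_X[OF w0 d(2), of 0] sS(2) d(3) N0 by auto
  interpret bdata K N a' A B using d nw N0 by unfold_locales auto
  have K: "K = 2 * M" using K_eq[OF d(1,2) N0] nw d(3) sS(1) by simp
  have A0: "0 < A 0"
  proof (rule ccontr)
    assume "\<not> 0 < A 0"
    then have "inb K A B 0 0" using w0 K M by (auto simp: inb_def wf0_def)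
    then show False using nw by blast
  qed
  obtain l where l: "inb K A B (N - 1) l" using s_bit[of "N - 1"] sS(3) a d(3) N0 by auto
  have lK: "l = K - 1" using lastb[OF l] by simp
  have BK: "B (K - 1) = N - 1"
  proof -
    have "B (K - 1) < N" using d(1) K M by (simp add: wfd_def)
    moreover have "N - 1 \<le> B (K - 1)" using l lK by (simp add: inb_def)
    ultimately show ?thesis by simp
  qed
  have "lab a' (K - 1) = a" using s_in[OF l] lK sS(3) d(3) by simp
  moreover have "odd (K - 1)" using K M by simp
  ultimately have "flip a' = a" by (simp add: lab_def)
  then have aa: "a' = flip a" by (metis flip_flip)
  have "(A, B) \<in> D2 (2 * M) N" using d(1) A0 K BK by (simp add: D2_def)
  moreover have "s = (\<lambda>(A, B). bld N (2 * M) (flip a) A B) (A, B)" using d(3) aa K by simp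
  ultimately show "s \<in> (\<lambda>(A, B). bld N (2 * M) (flip a) A B) ` D2 (2 * M) N" by (rule rev_image_eqI)
qed


lemma wf0_lower: "wf0 K A B \<Longrightarrow> l < K \<Longrightarrow> A 0 + l \<le> A l \<and> A 0 + l \<le> B l"
proof (induction l)
  case 0 then show ?case by (simp add: wf0_def)
next
  case (Suc l)
  then have "A 0 + l \<le> B l" "B l < A (Suc l)" "A (Suc l) \<le> B (Suc l)" by (auto simp: wf0_def)
  then show ?case by simp
qed

lemma wf0_upper: "wf0 K A B \<Longrightarrow> d < K \<Longrightarrow> A (K - 1 - d) + d \<le> B (K - 1) \<and> B (K - 1 - d) + d \<le> B (K - 1)"
proof (induction d)
  case 0 then show ?case by (simp add: wf0_def)
next
  case (Suc d)
  define l where "l = K - 1 - Suc d"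
  have l1: "Suc l = K - 1 - d" "Suc l < K" using Suc.prems by (auto simp: l_def)
  then have "A (Suc l) + d \<le> B (K - 1)" using Suc by simp
  moreover have "B l < A (Suc l)" using Suc.prems(1) l1(2) unfolding wf0_def by blast
  moreover have "A l \<le> B l" using Suc.prems(1) l1(2) unfolding wf0_def by simp
  ultimately have "A l + Suc d \<le> B (K - 1) \<and> B l + Suc d \<le> B (K - 1)" by linarith
  then show ?case unfolding l_def .
qed

definition leD :: "nat \<Rightarrow> (nat \<Rightarrow> nat) \<times> (nat \<Rightarrow> nat) \<Rightarrow> (nat \<Rightarrow> nat) \<times> (nat \<Rightarrow> nat) \<Rightarrow> bool" where
  "leD K u v = (\<forall>i<K. fst u i \<le> fst v i \<and> snd v i \<le> snd u i)"

definition G1 :: "nat \<Rightarrow> (nat \<Rightarrow> nat) \<times> (nat \<Rightarrow> nat) \<Rightarrow> (nat \<Rightarrow> nat) \<times> (nat \<Rightarrow> nat)" where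
  "G1 m u = ((\<lambda>l. if 2 * l < m then l else fst u l), (\<lambda>l. if 2 * l + 1 < m then l else snd u l))"

definition G2 :: "nat \<Rightarrow> nat \<Rightarrow> nat \<Rightarrow> (nat \<Rightarrow> nat) \<times> (nat \<Rightarrow> nat) \<Rightarrow> (nat \<Rightarrow> nat) \<times> (nat \<Rightarrow> nat)" where
  "G2 K N m u = ((\<lambda>l. if 2 * (K - 1 - l) + 1 < m then N - K + l else fst u l),
                 (\<lambda>l. if 2 * (K - 1 - l) < m then N - K + l else snd u l))"

lemma bld_cong: "(\<And>l. l < K \<Longrightarrow> A l = A' l \<and> B l = B' l) \<Longrightarrow> bld N K a A B = bld N K a A' B'"
  unfolding bld_def by (intro map_cong refl bval_cong) (auto simp: inb_def)

lemma G1_0: "G1 0 u = u" by (simp add: G1_def)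

lemma G2_0: "G2 K N 0 u = u" by (simp add: G2_def)

lemma G1_mono: "leD K u v \<Longrightarrow> leD K (G1 m u) (G1 m v)"
  by (auto simp: leD_def G1_def)

lemma G2_mono: "leD K u v \<Longrightarrow> leD K (G2 K N m u) (G2 K N m v)"
  by (auto simp: leD_def G2_def)

lemma D1_lower: "(A, B) \<in> D1 K N \<Longrightarrow> l < K \<Longrightarrow> l \<le> A l \<and> l \<le> B l"
  using wf0_lower[of K A B l] by (auto simp: D1_def wfd_def)

lemma D2_upper: "(A, B) \<in> D2 K N \<Longrightarrow> l < K \<Longrightarrow> A l \<le> N - K + l \<and> B l \<le> N - K + l"
proof -
  assume u: "(A, B) \<in> D2 K N" and l: "l < K"
  then have w: "wf0 K A B" "B (K - 1) = N - 1" "B (K - 1) < N" by (auto simp: D2_def wfd_def)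
  have "A (K - 1 - (K - 1 - l)) + (K - 1 - l) \<le> B (K - 1) \<and> B (K - 1 - (K - 1 - l)) + (K - 1 - l) \<le> B (K - 1)"
    using wf0_upper[OF w(1), of "K - 1 - l"] l by simp
  moreover have "K - 1 - (K - 1 - l) = l" using l by simp
  ultimately show ?thesis using w l by auto
qed

lemma G1_D1:
  assumes u: "u \<in> D1 K N" and KN: "K < N"
  shows "G1 m u \<in> D1 K N"
proof -
  obtain A B where AB: "u = (A, B)" by fastforce
  have w: "wf0 K A B" "\<forall>i<K. B i < N" "A 0 = 0" "B (K - 1) < N - 1" using u AB by (auto simp: D1_def wfd_def)
  have lo: "\<And>l. l < K \<Longrightarrow> l \<le> A l \<and> l \<le> B l" using D1_lower u AB by blast
  have w1: "\<forall>i<K. A i \<le> B i" "\<forall>i. Suc i < K \<longrightarrow> B i < A (Suc i)" using w(1) by (auto simp: wf0_def)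
  let ?A = "\<lambda>l. if 2 * l < m then l else A l" and ?B = "\<lambda>l. if 2 * l + 1 < m then l else B l"
  have "\<forall>i<K. ?A i \<le> ?B i" using w1 lo by auto
  moreover have "\<forall>i. Suc i < K \<longrightarrow> ?B i < ?A (Suc i)"
  proof (intro allI impI)
    fix i assume i: "Suc i < K"
    show "?B i < ?A (Suc i)"
      using w1(2)[rule_format, OF i] lo[OF i] lo[of i] i by auto
  qed
  moreover have "\<forall>i<K. ?B i < N" using w(2) KN by auto
  ultimately have W: "wfd K N ?A ?B" unfolding wfd_def wf0_def by blast
  have f4: "?A 0 = 0" using w(3) by simp
  have f5: "?B (K - 1) < N - 1" using w(4) KN by auto
  have "(?A, ?B) \<in> D1 K N" by (simp only: D1_def mem_Collect_eq case_prod_conv) (intro conjI W f4 f5)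
  moreover have "G1 m u = (?A, ?B)" unfolding AB G1_def fst_conv snd_conv by (rule refl)
  ultimately show ?thesis by simp
qed

lemma G2_D2:
  assumes u: "u \<in> D2 K N" and KN: "K < N" and K0: "0 < K"
  shows "G2 K N m u \<in> D2 K N"
proof -
  obtain A B where AB: "u = (A, B)" by fastforce
  have w: "wf0 K A B" "\<forall>i<K. B i < N" "0 < A 0" "B (K - 1) = N - 1" using u AB by (auto simp: D2_def wfd_def)
  have up: "\<And>l. l < K \<Longrightarrow> A l \<le> N - K + l \<and> B l \<le> N - K + l" using D2_upper u AB by blast
  have w1: "\<forall>i<K. A i \<le> B i" "\<forall>i. Suc i < K \<longrightarrow> B i < A (Suc i)" using w(1) by (auto simp: wf0_def)
  let ?A = "\<lambda>l. if 2 * (K - 1 - l) + 1 < m then N - K + l else A l"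
  let ?B = "\<lambda>l. if 2 * (K - 1 - l) < m then N - K + l else B l"
  have "\<forall>i<K. ?A i \<le> ?B i" using w1 up by auto
  moreover have "\<forall>i. Suc i < K \<longrightarrow> ?B i < ?A (Suc i)"
  proof (intro allI impI)
    fix i assume i: "Suc i < K"
    have e: "K - 1 - i = Suc (K - 1 - Suc i)" using i by simp
    show "?B i < ?A (Suc i)"
      using w1(2)[rule_format, OF i] up[OF i] up[of i] i KN unfolding e by auto
  qed
  moreover have "\<forall>i<K. ?B i < N" using w(2) KN by auto
  ultimately have W: "wfd K N ?A ?B" unfolding wfd_def wf0_def by blast
  have f4: "0 < ?A 0" using w(3) KN by simp
  have f5: "?B (K - 1) = N - 1" using w(4) KN K0 by auto
  have "(?A, ?B) \<in> D2 K N" by (simp only: D2_def mem_Collect_eq case_prod_conv) (intro conjI W f4 f5)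
  moreover have "G2 K N m u = (?A, ?B)" unfolding AB G2_def fst_conv snd_conv by (rule refl)
  ultimately show ?thesis by simp
qed

lemma G1_step:
  assumes u: "u \<in> D1 K N"
  shows "(even j \<longrightarrow> leD K (G1 (Suc j) u) (G1 j u)) \<and> (odd j \<longrightarrow> leD K (G1 j u) (G1 (Suc j) u))"
proof -
  obtain A B where AB: "u = (A, B)" by fastforce
  have lo: "\<And>l. l < K \<Longrightarrow> l \<le> A l \<and> l \<le> B l" using D1_lower u AB by blast
  show ?thesis unfolding AB leD_def G1_def using lo by auto presburger+
qed

lemma G2_step:
  assumes u: "u \<in> D2 K N"
  shows "(even j \<longrightarrow> leD K (G2 K N (Suc j) u) (G2 K N j u)) \<and> (odd j \<longrightarrow> leD K (G2 K N j u) (G2 K N (Suc j) u))"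
proof -
  obtain A B where AB: "u = (A, B)" by fastforce
  have up: "\<And>l. l < K \<Longrightarrow> A l \<le> N - K + l \<and> B l \<le> N - K + l" using D2_upper u AB by blast
  show ?thesis unfolding AB leD_def G2_def using up by auto presburger+
qed



lemma transfer_contr:
  fixes bl :: "'d \<Rightarrow> 'a" and leD :: "'d \<Rightarrow> 'd \<Rightarrow> bool"
  assumes fp: "fposet P le" and PD: "P = bl ` D"
    and ord1: "\<And>u v. u \<in> D \<Longrightarrow> v \<in> D \<Longrightarrow> le (bl u) (bl v) \<Longrightarrow> leD u v"
    and ord2: "\<And>u v. u \<in> D \<Longrightarrow> v \<in> D \<Longrightarrow> leD u v \<Longrightarrow> le (bl u) (bl v)"
    and GD: "\<And>j u. u \<in> D \<Longrightarrow> G j u \<in> D"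
    and Gmono: "\<And>j u v. u \<in> D \<Longrightarrow> v \<in> D \<Longrightarrow> leD u v \<Longrightarrow> leD (G j u) (G j v)"
    and G0: "\<And>u. u \<in> D \<Longrightarrow> bl (G 0 u) = bl u"
    and Gm: "\<And>u. u \<in> D \<Longrightarrow> bl (G m u) = c"
    and Gstep: "\<And>j. j < m \<Longrightarrow> (\<forall>u\<in>D. leD (G j u) (G (Suc j) u)) \<or> (\<forall>u\<in>D. leD (G (Suc j) u) (G j u))"
  shows "contractible_space (geom_real P le)"
proof -
  interpret fposet P le by (rule fp)
  define dec where "dec s = (SOME u. u \<in> D \<and> bl u = s)" for s
  have dec: "dec s \<in> D \<and> bl (dec s) = s" if "s \<in> P" for s
    unfolding dec_def by (rule someI_ex) (use that PD in auto)
  define f where "f j s = bl (G j (dec s))" for j s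
  show ?thesis
  proof (rule zigzag_contractible[of f m c])
    show "f j x \<in> P" if "x \<in> P" for j x using dec[OF that] GD PD unfolding f_def by blast
    show "le (f j x) (f j y)" if "x \<in> P" "y \<in> P" "le x y" for j x y
    proof -
      have "leD (dec x) (dec y)" using ord1[of "dec x" "dec y"] dec[OF that(1)] dec[OF that(2)] that(3) by simp
      then have "leD (G j (dec x)) (G j (dec y))" using Gmono dec that by blast
      then show ?thesis unfolding f_def using ord2 GD dec that by blast
    qed
    show "f 0 x = x" if "x \<in> P" for x using G0 dec[OF that] unfolding f_def by simp
    show "f m x = c" if "x \<in> P" for x using Gm dec[OF that] unfolding f_def by simp
    show "(\<forall>x\<in>P. le (f j x) (f (Suc j) x)) \<or> (\<forall>x\<in>P. le (f (Suc j) x) (f j x))" if "j < m" for j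
      using Gstep[OF that]
    proof
      assume h: "\<forall>u\<in>D. leD (G j u) (G (Suc j) u)"
      have "le (f j x) (f (Suc j) x)" if "x \<in> P" for x
        unfolding f_def using ord2 GD dec[OF that] h by blast
      then show ?thesis by blast
    next
      assume h: "\<forall>u\<in>D. leD (G (Suc j) u) (G j u)"
      have "le (f (Suc j) x) (f j x)" if "x \<in> P" for x
        unfolding f_def using ord2 GD dec[OF that] h by blast
      then show ?thesis by blast
    qed
  qed
qed

lemma finite_sym: "finite (UNIV :: sym set)"
proof -
  have "UNIV = {S0, S1, SX}" by (auto intro: sym.exhaust)
  then show ?thesis by (metis finite.emptyI finite.insertI)
qed

lemma fposet_strle:
  assumes "P \<subseteq> {s. length s = N}"
  shows "fposet P strle"
proof
  have "P \<subseteq> {xs. set xs \<subseteq> UNIV \<and> length xs = N}" using assms by auto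
  then show "finite P" using finite_lists_length_eq[OF finite_sym, of N] finite_subset by blast
  show "strle x x" for x by (simp add: strle_def)
  show "strle x z" if "strle x y" "strle y z" for x y z using that unfolding strle_def by metis
  show "x = y" if "x \<in> P" "y \<in> P" "strle x y" "strle y x" for x y
    using that unfolding strle_def by (metis list_eq_iff_nth_eq sym.distinct)
qed


lemma Str_ab_len: "Str_ab N M a b \<subseteq> {s. length s = N}"
  by (auto simp: Str_ab_def Str_def)

lemma contr_aX:
  assumes a: "a \<noteq> SX" and M: "0 < M" "2 * M < N"
  shows "contractible_space (geom_real (Str_ab N M a SX) strle)"
proof (rule transfer_contr[where bl = "\<lambda>(A, B). bld N (2 * M) a A B" and D = "D1 (2 * M) N"
      and leD = "leD (2 * M)" and G = G1 and m = "2 * (2 * M)" and c = "bld N (2 * M) a (\<lambda>l. l) (\<lambda>l. l)"])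
  show "fposet (Str_ab N M a SX) strle" by (rule fposet_strle[OF Str_ab_len])
  show "Str_ab N M a SX = (\<lambda>(A, B). bld N (2 * M) a A B) ` D1 (2 * M) N" by (rule Str_aX[OF a M])
  show "leD (2 * M) u v" if "u \<in> D1 (2 * M) N" "v \<in> D1 (2 * M) N"
    "strle ((\<lambda>(A, B). bld N (2 * M) a A B) u) ((\<lambda>(A, B). bld N (2 * M) a A B) v)" for u v
    using that strle_data[OF _ _ a] unfolding leD_def D1_def by auto
  show "strle ((\<lambda>(A, B). bld N (2 * M) a A B) u) ((\<lambda>(A, B). bld N (2 * M) a A B) v)"
    if "u \<in> D1 (2 * M) N" "v \<in> D1 (2 * M) N" "leD (2 * M) u v" for u v
    using that data_strle[OF _ _ a] unfolding leD_def D1_def by auto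
  show "G1 j u \<in> D1 (2 * M) N" if "u \<in> D1 (2 * M) N" for j u using G1_D1[OF that] M by simp
  show "leD (2 * M) (G1 j u) (G1 j v)" if "leD (2 * M) u v" for j u v using G1_mono[OF that] .
  show "(\<lambda>(A, B). bld N (2 * M) a A B) (G1 0 u) = (\<lambda>(A, B). bld N (2 * M) a A B) u" for u
    by (simp add: G1_0)
  show "(\<lambda>(A, B). bld N (2 * M) a A B) (G1 (2 * (2 * M)) u) = bld N (2 * M) a (\<lambda>l. l) (\<lambda>l. l)" for u
    unfolding G1_def by (simp, rule bld_cong) auto
  show "(\<forall>u\<in>D1 (2 * M) N. leD (2 * M) (G1 j u) (G1 (Suc j) u)) \<or> (\<forall>u\<in>D1 (2 * M) N. leD (2 * M) (G1 (Suc j) u) (G1 j u))" for j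
    using G1_step by (cases "even j") blast+
qed

lemma contr_Xa:
  assumes a: "a \<noteq> SX" and M: "0 < M" "2 * M < N"
  shows "contractible_space (geom_real (Str_ab N M SX a) strle)"
proof -
  have fa: "flip a \<noteq> SX" using a by (cases a) auto
  show ?thesis
  proof (rule transfer_contr[where bl = "\<lambda>(A, B). bld N (2 * M) (flip a) A B" and D = "D2 (2 * M) N"
      and leD = "leD (2 * M)" and G = "G2 (2 * M) N" and m = "2 * (2 * M)"
      and c = "bld N (2 * M) (flip a) (\<lambda>l. N - 2 * M + l) (\<lambda>l. N - 2 * M + l)"])
    show "fposet (Str_ab N M SX a) strle" by (rule fposet_strle[OF Str_ab_len])
    show "Str_ab N M SX a = (\<lambda>(A, B). bld N (2 * M) (flip a) A B) ` D2 (2 * M) N" by (rule Str_Xa[OF a M])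
    show "leD (2 * M) u v" if "u \<in> D2 (2 * M) N" "v \<in> D2 (2 * M) N"
      "strle ((\<lambda>(A, B). bld N (2 * M) (flip a) A B) u) ((\<lambda>(A, B). bld N (2 * M) (flip a) A B) v)" for u v
      using that strle_data[OF _ _ fa] unfolding leD_def D2_def by auto
    show "strle ((\<lambda>(A, B). bld N (2 * M) (flip a) A B) u) ((\<lambda>(A, B). bld N (2 * M) (flip a) A B) v)"
      if "u \<in> D2 (2 * M) N" "v \<in> D2 (2 * M) N" "leD (2 * M) u v" for u v
      using that data_strle[OF _ _ fa] unfolding leD_def D2_def by auto
    show "G2 (2 * M) N j u \<in> D2 (2 * M) N" if "u \<in> D2 (2 * M) N" for j u using G2_D2[OF that] M by simp
    show "leD (2 * M) (G2 (2 * M) N j u) (G2 (2 * M) N j v)" if "leD (2 * M) u v" for j u v using G2_mono[OF that] .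
    show "(\<lambda>(A, B). bld N (2 * M) (flip a) A B) (G2 (2 * M) N 0 u) = (\<lambda>(A, B). bld N (2 * M) (flip a) A B) u" for u
      by (simp add: G2_0)
    show "(\<lambda>(A, B). bld N (2 * M) (flip a) A B) (G2 (2 * M) N (2 * (2 * M)) u) = bld N (2 * M) (flip a) (\<lambda>l. N - 2 * M + l) (\<lambda>l. N - 2 * M + l)" for u
      unfolding G2_def by (simp, rule bld_cong) auto
    show "(\<forall>u\<in>D2 (2 * M) N. leD (2 * M) (G2 (2 * M) N j u) (G2 (2 * M) N (Suc j) u)) \<or> (\<forall>u\<in>D2 (2 * M) N. leD (2 * M) (G2 (2 * M) N (Suc j) u) (G2 (2 * M) N j u))" for j
      using G2_step by (cases "even j") blast+
  qed
qed

theorem proposition5p6: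
  fixes N M :: nat
  assumes "0 < M" and "2 * M < N"
  shows "contractible_space (geom_real (Str_ab N M S0 SX) strle)
       \<and> contractible_space (geom_real (Str_ab N M SX S0) strle)
       \<and> contractible_space (geom_real (Str_ab N M S1 SX) strle)
       \<and> contractible_space (geom_real (Str_ab N M SX S1) strle)"
  using contr_aX[of S0 M N] contr_Xa[of S0 M N] contr_aX[of S1 M N] contr_Xa[of S1 M N] assms by simp


end
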